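(* Let $\Lambda$ be a locally finite $k$-graph with no sources or sinks, and let $\alpha$ be an action of $\mathbb{Z}^l$ on $\Lambda$ by automorphisms. Then $\Lambda$ is $\alpha$-aperiodic if and only if $(\Lambda^\infty,\tau^{\sigma,\alpha})$ is topologically free.
   Context: A $k$-graph is a countable category $\Lambda$ with a functor $d:\Lambda\to\mathbb{N}^k$ with unique factorisation; vertices are degree-$0$ morphisms. Locally finite with no sources or sinks: for each $p$ and vertex $v$, $v\Lambda^p$ and $\Lambda^pv$ are finite and nonempty. An automorphism is a bijective degree-preserving functor. $\Lambda^\infty$ is the set of degree-preserving functors $x:\Omega_k\to\Lambda$ ($\Omega_k=\{(a,b)\in\mathbb{N}^k\times\mathbb{N}^k:a\le b\}$ with $r(a,b)=(a,a)$, $s(a,b)=(b,b)$, $(a,b)(b,c)=(a,c)$, $d(a,b)=b-a$), with topology generated by the cylinder sets $\lambda\Lambda^\infty=\{x:x(0,d(\lambda))=\lambda\}$; $v\Lambda^\infty=\{x:x(0,0)=v\}$; $\sigma^p(x)(0,n)=x(p,p+n)$; $\phi^\infty(x)(0,n)=\phi(x(0,n))$ for an automorphism $\phi$. $\tau^{\sigma,\alpha}_{(p,m)}=\sigma^p\circ\alpha^\infty_{-m}$ for $(p,m)\in\mathbb{N}^k\times\mathbb{N}^l$. $(\Lambda^\infty,\tau^{\sigma,\alpha})$ is topologically free if for all distinct $s,t\in\mathbb{N}^k\times\mathbb{N}^l$ the set $\{x:\tau^{\sigma,\alpha}_s(x)=\tau^{\sigma,\alpha}_t(x)\}$ has empty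 interior. $\Lambda$ is $\alpha$-aperiodic if for each vertex $v$ and distinct $(p,m),(q,n)\in\mathbb{N}^k\times\mathbb{N}^l$ there is $x\in v\Lambda^\infty$ with $\sigma^p(\alpha^\infty_{-m}(x))\ne\sigma^q(\alpha^\infty_{-n}(x))$. *)

theory Defs
  imports "HOL-Analysis.Analysis"
begin

text \<open>Elements of N^k are represented as functions nat => nat vanishing from index k on;
  elements of Z^l as functions nat => int vanishing from index l on.\<close>

definition NV :: "nat \<Rightarrow> (nat \<Rightarrow> nat) set" where
  "NV k = {n. \<forall>i\<ge>k. n i = 0}"

definition ZV :: "nat \<Rightarrow> (nat \<Rightarrow> int) set" where
  "ZV l = {n. \<forall>i\<ge>l. n i = 0}"

text \<open>A category presented by its morphisms; objects are identified with identity morphisms.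
  cmp mu nu is the composite mu nu, defined when src mu = rng nu.\<close>
record 'a kgraph =
  mor :: "'a set"
  rng :: "'a \<Rightarrow> 'a"
  src :: "'a \<Rightarrow> 'a"
  cmp :: "'a \<Rightarrow> 'a \<Rightarrow> 'a"
  deg :: "'a \<Rightarrow> nat \<Rightarrow> nat"

definition is_kgraph :: "nat \<Rightarrow> 'a kgraph \<Rightarrow> bool" where
  "is_kgraph k G \<longleftrightarrow>
     countable (mor G) \<and>
     (\<forall>f\<in>mor G. rng G f \<in> mor G \<and> src G f \<in> mor G) \<and>
     (\<forall>f\<in>mor G. rng G (rng G f) = rng G f \<and> src G (rng G f) = rng G f \<and>
                 rng G (src G f) = src G f \<and> src G (src G f) = src G f) \<and>
     (\<forall>f\<in>mor G. cmp G (rng G f) f = f \<and> cmp G f (src G f) = f) \<and>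
     (\<forall>f\<in>mor G. \<forall>g\<in>mor G. src G f = rng G g \<longrightarrow>
        cmp G f g \<in> mor G \<and> rng G (cmp G f g) = rng G f \<and> src G (cmp G f g) = src G g) \<and>
     (\<forall>f\<in>mor G. \<forall>g\<in>mor G. \<forall>h\<in>mor G. src G f = rng G g \<longrightarrow> src G g = rng G h \<longrightarrow>
        cmp G (cmp G f g) h = cmp G f (cmp G g h)) \<and>
     (\<forall>f\<in>mor G. deg G f \<in> NV k) \<and>
     (\<forall>f\<in>mor G. \<forall>g\<in>mor G. src G f = rng G g \<longrightarrow>
        deg G (cmp G f g) = (\<lambda>i. deg G f i + deg G g i)) \<and>
     (\<forall>f\<in>mor G. \<forall>m\<in>NV k. \<forall>n\<in>NV k. deg G f = (\<lambda>i. m i + n i) \<longrightarrow>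
        (\<exists>!(g, h). g \<in> mor G \<and> h \<in> mor G \<and> src G g = rng G h \<and>
                   deg G g = m \<and> deg G h = n \<and> cmp G g h = f))"

definition vertices :: "'a kgraph \<Rightarrow> 'a set" where
  "vertices G = {v \<in> mor G. deg G v = (\<lambda>_. 0)}"

definition locally_finite_no_sources_sinks :: "nat \<Rightarrow> 'a kgraph \<Rightarrow> bool" where
  "locally_finite_no_sources_sinks k G \<longleftrightarrow>
     (\<forall>p\<in>NV k. \<forall>v\<in>vertices G.
        finite {f \<in> mor G. rng G f = v \<and> deg G f = p} \<and>
        {f \<in> mor G. rng G f = v \<and> deg G f = p} \<noteq> {} \<and>
        finite {f \<in> mor G. src G f = v \<and> deg G f = p} \<and>
        {f \<in> mor G. src G f = v \<and> deg G f = p} \<noteq> {})"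

definition is_automorphism :: "'a kgraph \<Rightarrow> ('a \<Rightarrow> 'a) \<Rightarrow> bool" where
  "is_automorphism G \<phi> \<longleftrightarrow>
     bij_betw \<phi> (mor G) (mor G) \<and>
     (\<forall>f\<in>mor G. deg G (\<phi> f) = deg G f \<and>
                 \<phi> (rng G f) = rng G (\<phi> f) \<and> \<phi> (src G f) = src G (\<phi> f)) \<and>
     (\<forall>f\<in>mor G. \<forall>g\<in>mor G. src G f = rng G g \<longrightarrow> \<phi> (cmp G f g) = cmp G (\<phi> f) (\<phi> g))"

definition is_action :: "nat \<Rightarrow> 'a kgraph \<Rightarrow> ((nat \<Rightarrow> int) \<Rightarrow> 'a \<Rightarrow> 'a) \<Rightarrow> bool" where
  "is_action l G \<alpha> \<longleftrightarrow>
     (\<forall>m\<in>ZV l. is_automorphism G (\<alpha> m)) \<and>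
     (\<forall>f\<in>mor G. \<alpha> (\<lambda>_. 0) f = f) \<and>
     (\<forall>m\<in>ZV l. \<forall>n\<in>ZV l. \<forall>f\<in>mor G. \<alpha> (\<lambda>i. m i + n i) f = \<alpha> m (\<alpha> n f))"

text \<open>Omega_k: pairs (a,b) in N^k x N^k with a <= b. Infinite paths are degree-preserving functors
  Omega_k -> G, represented as functions of (a,b), extensionally undefined off Omega_k.\<close>
definition in_Omega :: "nat \<Rightarrow> (nat \<Rightarrow> nat) \<Rightarrow> (nat \<Rightarrow> nat) \<Rightarrow> bool" where
  "in_Omega k a b \<longleftrightarrow> a \<in> NV k \<and> b \<in> NV k \<and> a \<le> b"

definition inf_paths :: "nat \<Rightarrow> 'a kgraph \<Rightarrow> ((nat \<Rightarrow> nat) \<Rightarrow> (nat \<Rightarrow> nat) \<Rightarrow> 'a) set" where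
  "inf_paths k G = {x.
     (\<forall>a b. in_Omega k a b \<longrightarrow>
        x a b \<in> mor G \<and> deg G (x a b) = (\<lambda>i. b i - a i) \<and>
        rng G (x a b) = x a a \<and> src G (x a b) = x b b) \<and>
     (\<forall>a b e. in_Omega k a b \<longrightarrow> in_Omega k b e \<longrightarrow> cmp G (x a b) (x b e) = x a e) \<and>
     (\<forall>a b. \<not> in_Omega k a b \<longrightarrow> x a b = undefined)}"

definition shift :: "nat \<Rightarrow> (nat \<Rightarrow> nat) \<Rightarrow> ((nat \<Rightarrow> nat) \<Rightarrow> (nat \<Rightarrow> nat) \<Rightarrow> 'a)
                      \<Rightarrow> ((nat \<Rightarrow> nat) \<Rightarrow> (nat \<Rightarrow> nat) \<Rightarrow> 'a)" where
  "shift k p x = (\<lambda>a b. if in_Omega k a b then x (\<lambda>i. a i + p i) (\<lambda>i. b i + p i) else undefined)"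

definition path_map :: "nat \<Rightarrow> ('a \<Rightarrow> 'a) \<Rightarrow> ((nat \<Rightarrow> nat) \<Rightarrow> (nat \<Rightarrow> nat) \<Rightarrow> 'a)
                      \<Rightarrow> ((nat \<Rightarrow> nat) \<Rightarrow> (nat \<Rightarrow> nat) \<Rightarrow> 'a)" where
  "path_map k \<phi> x = (\<lambda>a b. if in_Omega k a b then \<phi> (x a b) else undefined)"

text \<open>tau_(p,m) = sigma^p o alpha^infinity_(-m).\<close>
definition tau :: "nat \<Rightarrow> ((nat \<Rightarrow> int) \<Rightarrow> 'a \<Rightarrow> 'a) \<Rightarrow> (nat \<Rightarrow> nat) \<times> (nat \<Rightarrow> nat)
                    \<Rightarrow> ((nat \<Rightarrow> nat) \<Rightarrow> (nat \<Rightarrow> nat) \<Rightarrow> 'a)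
                    \<Rightarrow> ((nat \<Rightarrow> nat) \<Rightarrow> (nat \<Rightarrow> nat) \<Rightarrow> 'a)" where
  "tau k \<alpha> pm x = shift k (fst pm) (path_map k (\<alpha> (\<lambda>i. - int (snd pm i))) x)"

definition cylinder :: "nat \<Rightarrow> 'a kgraph \<Rightarrow> 'a \<Rightarrow> ((nat \<Rightarrow> nat) \<Rightarrow> (nat \<Rightarrow> nat) \<Rightarrow> 'a) set" where
  "cylinder k G f = {x \<in> inf_paths k G. x (\<lambda>_. 0) (deg G f) = f}"

definition path_topology :: "nat \<Rightarrow> 'a kgraph \<Rightarrow> ((nat \<Rightarrow> nat) \<Rightarrow> (nat \<Rightarrow> nat) \<Rightarrow> 'a) topology" where
  "path_topology k G =
     subtopology (topology_generated_by (cylinder k G ` mor G)) (inf_paths k G)"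

definition topologically_free :: "nat \<Rightarrow> nat \<Rightarrow> 'a kgraph \<Rightarrow> ((nat \<Rightarrow> int) \<Rightarrow> 'a \<Rightarrow> 'a) \<Rightarrow> bool" where
  "topologically_free k l G \<alpha> \<longleftrightarrow>
     (\<forall>s\<in>NV k \<times> NV l. \<forall>t\<in>NV k \<times> NV l. s \<noteq> t \<longrightarrow>
        path_topology k G interior_of {x \<in> inf_paths k G. tau k \<alpha> s x = tau k \<alpha> t x} = {})"

definition alpha_aperiodic :: "nat \<Rightarrow> nat \<Rightarrow> 'a kgraph \<Rightarrow> ((nat \<Rightarrow> int) \<Rightarrow> 'a \<Rightarrow> 'a) \<Rightarrow> bool" where
  "alpha_aperiodic k l G \<alpha> \<longleftrightarrow>
     (\<forall>v\<in>vertices G. \<forall>s\<in>NV k \<times> NV l. \<forall>t\<in>NV k \<times> NV l. s \<noteq> t \<longrightarrow>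
        (\<exists>x\<in>inf_paths k G. x (\<lambda>_. 0) (\<lambda>_. 0) = v \<and> tau k \<alpha> s x \<noteq> tau k \<alpha> t x))"

end

theory Submission
  imports Defs
begin

locale kg = fixes k :: nat and G :: "'a kgraph" assumes KG: "is_kgraph k G"
begin

lemma rng_mor: "f \<in> mor G \<Longrightarrow> rng G f \<in> mor G" and src_mor: "f \<in> mor G \<Longrightarrow> src G f \<in> mor G"
  using KG unfolding is_kgraph_def by auto
lemma rr: "f \<in> mor G \<Longrightarrow> rng G (rng G f) = rng G f" and sr: "f \<in> mor G \<Longrightarrow> src G (rng G f) = rng G f"
  and rs: "f \<in> mor G \<Longrightarrow> rng G (src G f) = src G f" and ss: "f \<in> mor G \<Longrightarrow> src G (src G f) = src G f"
  using KG unfolding is_kgraph_def by auto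
lemma cmp_rng: "f \<in> mor G \<Longrightarrow> cmp G (rng G f) f = f" and cmp_src: "f \<in> mor G \<Longrightarrow> cmp G f (src G f) = f"
  using KG unfolding is_kgraph_def by auto
lemma cmp_mor: "f \<in> mor G \<Longrightarrow> g \<in> mor G \<Longrightarrow> src G f = rng G g \<Longrightarrow> cmp G f g \<in> mor G"
  and rng_cmp: "f \<in> mor G \<Longrightarrow> g \<in> mor G \<Longrightarrow> src G f = rng G g \<Longrightarrow> rng G (cmp G f g) = rng G f"
  and src_cmp: "f \<in> mor G \<Longrightarrow> g \<in> mor G \<Longrightarrow> src G f = rng G g \<Longrightarrow> src G (cmp G f g) = src G g"
  using KG unfolding is_kgraph_def by auto
lemma assoc: "f \<in> mor G \<Longrightarrow> g \<in> mor G \<Longrightarrow> h \<in> mor G \<Longrightarrow> src G f = rng G g \<Longrightarrow> src G g = rng G h \<Longrightarrow>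
   cmp G (cmp G f g) h = cmp G f (cmp G g h)"
  using KG unfolding is_kgraph_def by blast
lemma deg_NV: "f \<in> mor G \<Longrightarrow> deg G f \<in> NV k"
  using KG unfolding is_kgraph_def by auto
lemma deg_cmp: "f \<in> mor G \<Longrightarrow> g \<in> mor G \<Longrightarrow> src G f = rng G g \<Longrightarrow> deg G (cmp G f g) = (\<lambda>i. deg G f i + deg G g i)"
  using KG unfolding is_kgraph_def by auto
lemma ufac: "f \<in> mor G \<Longrightarrow> m \<in> NV k \<Longrightarrow> n \<in> NV k \<Longrightarrow> deg G f = (\<lambda>i. m i + n i) \<Longrightarrow>
        (\<exists>!(g, h). g \<in> mor G \<and> h \<in> mor G \<and> src G g = rng G h \<and>
                   deg G g = m \<and> deg G h = n \<and> cmp G g h = f)"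
  using KG unfolding is_kgraph_def by auto

lemma deg_rng: "f \<in> mor G \<Longrightarrow> deg G (rng G f) = (\<lambda>_. 0)"
proof -
  assume f: "f \<in> mor G"
  have "deg G (cmp G (rng G f) f) = (\<lambda>i. deg G (rng G f) i + deg G f i)"
    using f by (intro deg_cmp) (auto simp: rng_mor rr sr)
  then show ?thesis using f by (simp add: cmp_rng fun_eq_iff)
qed

lemma deg_src: "f \<in> mor G \<Longrightarrow> deg G (src G f) = (\<lambda>_. 0)"
  using deg_rng[of "src G f"] by (simp add: src_mor rs)

definition FP :: "'a \<Rightarrow> (nat \<Rightarrow> nat) \<Rightarrow> 'a \<Rightarrow> 'a \<Rightarrow> bool" where
  "FP f m g h \<longleftrightarrow> g \<in> mor G \<and> h \<in> mor G \<and> src G g = rng G h \<and>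
                   deg G g = m \<and> deg G h = (\<lambda>i. deg G f i - m i) \<and> cmp G g h = f"

definition fr :: "'a \<Rightarrow> (nat \<Rightarrow> nat) \<Rightarrow> 'a" where
  "fr f m = fst (THE p. case_prod (FP f m) p)"
definition bk :: "'a \<Rightarrow> (nat \<Rightarrow> nat) \<Rightarrow> 'a" where
  "bk f m = snd (THE p. case_prod (FP f m) p)"

lemma ex1: assumes "f \<in> mor G" "m \<in> NV k" "m \<le> deg G f" shows "\<exists>!p. case_prod (FP f m) p"
proof -
  have n: "(\<lambda>i. deg G f i - m i) \<in> NV k" using deg_NV[OF assms(1)] by (simp add: NV_def)
  have "deg G f = (\<lambda>i. m i + (deg G f i - m i))" using assms(3) by (auto simp: le_fun_def fun_eq_iff)
  from ufac[OF assms(1,2) n this] show ?thesis unfolding FP_def by simp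
qed

lemma fac: assumes "f \<in> mor G" "m \<in> NV k" "m \<le> deg G f"
  shows "fr f m \<in> mor G" "bk f m \<in> mor G" "src G (fr f m) = rng G (bk f m)"
    "deg G (fr f m) = m" "deg G (bk f m) = (\<lambda>i. deg G f i - m i)"
    "cmp G (fr f m) (bk f m) = f"
proof -
  have t: "case_prod (FP f m) (THE p. case_prod (FP f m) p)" using theI'[OF ex1[OF assms]] .
  obtain a b where ab: "(THE p. case_prod (FP f m) p) = (a, b)" by (cases "THE p. case_prod (FP f m) p") auto
  have "FP f m (fr f m) (bk f m)" using t unfolding fr_def bk_def ab by simp
  then show "fr f m \<in> mor G" "bk f m \<in> mor G" "src G (fr f m) = rng G (bk f m)"
    "deg G (fr f m) = m" "deg G (bk f m) = (\<lambda>i. deg G f i - m i)"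
    "cmp G (fr f m) (bk f m) = f" unfolding FP_def by auto
qed

lemma uniq: assumes "g \<in> mor G" "h \<in> mor G" "src G g = rng G h"
  shows "fr (cmp G g h) (deg G g) = g" "bk (cmp G g h) (deg G g) = h"
proof -
  let ?f = "cmp G g h" and ?m = "deg G g"
  have fm: "?f \<in> mor G" using assms by (rule cmp_mor)
  have dg: "deg G ?f = (\<lambda>i. deg G g i + deg G h i)" using assms by (rule deg_cmp)
  have "?m \<in> NV k" using assms by (simp add: deg_NV)
  moreover have "?m \<le> deg G ?f" using dg by (simp add: le_fun_def)
  ultimately have e: "\<exists>!p. case_prod (FP ?f ?m) p" using fm ex1 by blast
  have "case_prod (FP ?f ?m) (g, h)" using assms dg unfolding FP_def by auto
  then have "(THE p. case_prod (FP ?f ?m) p) = (g, h)" using e by (rule the1_equality[rotated])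
  then show "fr ?f ?m = g" "bk ?f ?m = h" unfolding fr_def bk_def by auto
qed

lemma fr_deg: "f \<in> mor G \<Longrightarrow> fr f (deg G f) = f"
  using uniq(1)[of f "src G f"] by (simp add: cmp_src src_mor rs)
lemma bk_deg: "f \<in> mor G \<Longrightarrow> bk f (deg G f) = src G f"
  using uniq(2)[of f "src G f"] by (simp add: cmp_src src_mor rs)
lemma bk_0: "f \<in> mor G \<Longrightarrow> bk f (\<lambda>_. 0) = f"
  using uniq(2)[of "rng G f" f] by (simp add: cmp_rng rng_mor sr deg_rng)

lemma src_back: assumes "f \<in> mor G" "m \<in> NV k" "m \<le> deg G f" shows "src G (bk f m) = src G f"
  using src_cmp[OF fac(1-3)[OF assms]] fac(6)[OF assms] by simp
lemma rng_front: assumes "f \<in> mor G" "m \<in> NV k" "m \<le> deg G f" shows "rng G (fr f m) = rng G f"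
  using rng_cmp[OF fac(1-3)[OF assms]] fac(6)[OF assms] by simp

lemma triple: assumes f: "f \<in> mor G" and m: "m \<in> NV k" and n: "n \<in> NV k" and mn: "m \<le> n" and nf: "n \<le> deg G f"
  shows "fr (fr f n) m = fr f m" "bk (fr f n) m = fr (bk f m) (\<lambda>i. n i - m i)"
    "bk (bk f m) (\<lambda>i. n i - m i) = bk f n"
proof -
  define g h where "g = fr f n" and "h = bk f n"
  note F = fac[OF f n nf, folded g_def h_def]
  have mg: "m \<le> deg G g" using F mn by simp
  define g1 g2 where "g1 = fr g m" and "g2 = bk g m"
  note F2 = fac[OF F(1) m mg, folded g1_def g2_def]
  have sg2: "src G g2 = rng G h" using src_back[OF F(1) m mg] F(3) by (simp add: g2_def)
  have fe: "f = cmp G g1 (cmp G g2 h)"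
    using F(6) F2(6) assoc[OF F2(1) F2(2) F(2) F2(3) sg2] by simp
  have c2: "cmp G g2 h \<in> mor G" using cmp_mor[OF F2(2) F(2) sg2] .
  have s1: "src G g1 = rng G (cmp G g2 h)" using F2(3) rng_cmp[OF F2(2) F(2) sg2] by simp
  have u1: "fr f m = g1" "bk f m = cmp G g2 h"
    using uniq[OF F2(1) c2 s1] F2(4) fe by simp_all
  have d2: "deg G g2 = (\<lambda>i. n i - m i)" using F2(5) F(4) by simp
  have u2: "fr (bk f m) (\<lambda>i. n i - m i) = g2" "bk (bk f m) (\<lambda>i. n i - m i) = h"
    using uniq[OF F2(2) F(2) sg2] u1 d2 by simp_all
  show "fr (fr f n) m = fr f m" using u1 g_def g1_def by simp
  show "bk (fr f n) m = fr (bk f m) (\<lambda>i. n i - m i)" using u2 g_def g2_def by simp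
  show "bk (bk f m) (\<lambda>i. n i - m i) = bk f n" using u2 h_def by simp
qed

lemma z0_NV: "(\<lambda>_. 0) \<in> NV k" by (simp add: NV_def)

lemma sub_NV: "b \<in> NV k \<Longrightarrow> (\<lambda>i. b i - a i) \<in> NV k" by (simp add: NV_def)
lemma add_NV: "b \<in> NV k \<Longrightarrow> a \<in> NV k \<Longrightarrow> (\<lambda>i. a i + b i) \<in> NV k" by (simp add: NV_def)

lemma P: assumes "x \<in> inf_paths k G" "in_Omega k a b"
  shows "x a b \<in> mor G" "deg G (x a b) = (\<lambda>i. b i - a i)" "rng G (x a b) = x a a" "src G (x a b) = x b b"
  using assms unfolding inf_paths_def by auto

lemma Pc: assumes "x \<in> inf_paths k G" "in_Omega k a b" "in_Omega k b e"
  shows "cmp G (x a b) (x b e) = x a e"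
  using assms unfolding inf_paths_def by auto

lemma PF: assumes x: "x \<in> inf_paths k G" and a: "a \<in> NV k" and b: "b \<in> NV k" and ab: "a \<le> b"
  shows "fr (x (\<lambda>_. 0) b) a = x (\<lambda>_. 0) a" "bk (x (\<lambda>_. 0) b) a = x a b"
proof -
  have o1: "in_Omega k (\<lambda>_. 0) a" using a z0_NV by (simp add: in_Omega_def le_fun_def)
  have o2: "in_Omega k a b" using a b ab by (simp add: in_Omega_def)
  have e: "x (\<lambda>_. 0) b = cmp G (x (\<lambda>_. 0) a) (x a b)" using Pc[OF x o1 o2] by simp
  have d: "deg G (x (\<lambda>_. 0) a) = a" using P(2)[OF x o1] by simp
  have s: "src G (x (\<lambda>_. 0) a) = rng G (x a b)" using P[OF x o1] P[OF x o2] by simp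
  show "fr (x (\<lambda>_. 0) b) a = x (\<lambda>_. 0) a" "bk (x (\<lambda>_. 0) b) a = x a b"
    using uniq[OF P(1)[OF x o1] P(1)[OF x o2] s] e d by simp_all
qed

lemma family:
  assumes W1: "\<And>n. n \<in> NV k \<Longrightarrow> w n \<in> mor G \<and> deg G (w n) = n"
    and W2: "\<And>n n'. n \<in> NV k \<Longrightarrow> n' \<in> NV k \<Longrightarrow> n \<le> n' \<Longrightarrow> fr (w n') n = w n"
  shows "(\<lambda>a b. if in_Omega k a b then bk (w b) a else undefined) \<in> inf_paths k G"
    "n \<in> NV k \<Longrightarrow> (\<lambda>a b. if in_Omega k a b then bk (w b) a else undefined) (\<lambda>_. 0) n = w n"
proof -
  let ?X = "(\<lambda>a b. if in_Omega k a b then bk (w b) a else undefined)"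
  have A: "?X a b \<in> mor G \<and> deg G (?X a b) = (\<lambda>i. b i - a i) \<and>
        rng G (?X a b) = ?X a a \<and> src G (?X a b) = ?X b b" if o: "in_Omega k a b" for a b
  proof -
    have a: "a \<in> NV k" and b: "b \<in> NV k" and ab: "a \<le> b" using o by (auto simp: in_Omega_def)
    have wb: "w b \<in> mor G" "deg G (w b) = b" using W1[OF b] by auto
    have wa: "w a \<in> mor G" "deg G (w a) = a" using W1[OF a] by auto
    have ab': "a \<le> deg G (w b)" using wb ab by simp
    note F = fac[OF wb(1) a ab']
    have oa: "in_Omega k a a" "in_Omega k b b" using a b by (auto simp: in_Omega_def)
    have "rng G (bk (w b) a) = src G (w a)" using F(3) W2[OF a b ab] by simp
    also have "\<dots> = bk (w a) a" using bk_deg[OF wa(1)] wa(2) by simp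
    finally have r: "rng G (bk (w b) a) = bk (w a) a" .
    have s: "src G (bk (w b) a) = bk (w b) b" using src_back[OF wb(1) a ab'] bk_deg[OF wb(1)] wb(2) by simp
    show ?thesis using o oa F r s wb by simp
  qed
  have C: "cmp G (?X a b) (?X b e) = ?X a e" if o1: "in_Omega k a b" and o2: "in_Omega k b e" for a b e
  proof -
    have a: "a \<in> NV k" and b: "b \<in> NV k" and e: "e \<in> NV k" and ab: "a \<le> b" and be: "b \<le> e"
      using o1 o2 by (auto simp: in_Omega_def)
    have ae: "a \<le> e" using ab be by (rule order_trans)
    have o3: "in_Omega k a e" using a e ae by (simp add: in_Omega_def)
    have we: "w e \<in> mor G" "deg G (w e) = e" using W1[OF e] by auto
    have be': "b \<le> deg G (w e)" and ae': "a \<le> deg G (w e)" using we be ae by simp_all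
    note T = triple[OF we(1) a b ab be']
    have wb: "w b = fr (w e) b" using W2[OF b e be] by simp
    let ?u = "bk (w e) a" and ?d = "\<lambda>i. b i - a i"
    have um: "?u \<in> mor G" and du: "deg G ?u = (\<lambda>i. e i - a i)" using fac[OF we(1) a ae'] we by auto
    have dle: "?d \<le> deg G ?u" using du be by (auto simp: le_fun_def intro: diff_le_mono)
    have "cmp G (bk (w b) a) (bk (w e) b) = cmp G (fr ?u ?d) (bk ?u ?d)" using T wb by simp
    also have "\<dots> = ?u" using fac(6)[OF um sub_NV[OF b] dle] .
    finally show ?thesis using o1 o2 o3 by simp
  qed
  show "?X \<in> inf_paths k G" unfolding inf_paths_def using A C by auto
  show "n \<in> NV k \<Longrightarrow> ?X (\<lambda>_. 0) n = w n"
  proof -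
    assume n: "n \<in> NV k"
    have "in_Omega k (\<lambda>_. 0) n" using n z0_NV by (simp add: in_Omega_def le_fun_def)
    then show ?thesis using bk_0 W1[OF n] by simp
  qed
qed

lemma concat:
  assumes lm: "l \<in> mor G" and y: "y \<in> inf_paths k G" and yv: "y (\<lambda>_. 0) (\<lambda>_. 0) = src G l"
  shows "\<exists>z\<in>inf_paths k G. z (\<lambda>_. 0) (deg G l) = l \<and>
     (\<forall>a b. in_Omega k a b \<longrightarrow> z (\<lambda>i. a i + deg G l i) (\<lambda>i. b i + deg G l i) = y a b)"
proof -
  define n where "n = deg G l"
  have nN: "n \<in> NV k" using deg_NV[OF lm] n_def by simp
  define F where "F r = cmp G l (y (\<lambda>_. 0) r)" for r
  have oz: "in_Omega k (\<lambda>_. 0) r" if "r \<in> NV k" for r using that z0_NV by (simp add: in_Omega_def le_fun_def)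
  have Y: "y (\<lambda>_. 0) r \<in> mor G" "deg G (y (\<lambda>_. 0) r) = r" "src G l = rng G (y (\<lambda>_. 0) r)"
    if "r \<in> NV k" for r using P[OF y oz[OF that]] P[OF y oz[OF z0_NV]] yv by simp_all
  have FM: "F r \<in> mor G" "deg G (F r) = (\<lambda>i. n i + r i)" if "r \<in> NV k" for r
    using cmp_mor[OF lm Y(1,3)[OF that]] deg_cmp[OF lm Y(1,3)[OF that]] Y(2)[OF that] n_def F_def by simp_all
  have key: "fr (F r') (\<lambda>i. n i + r i) = F r" if r: "r \<in> NV k" and r': "r' \<in> NV k" and rr': "r \<le> r'" for r r'
  proof -
    have o: "in_Omega k r r'" using r r' rr' by (simp add: in_Omega_def)
    have e: "y (\<lambda>_. 0) r' = cmp G (y (\<lambda>_. 0) r) (y r r')" using Pc[OF y oz[OF r] o] by simp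
    have s: "src G (y (\<lambda>_. 0) r) = rng G (y r r')" using P[OF y oz[OF r]] P[OF y o] by simp
    have "F r' = cmp G (F r) (y r r')"
      unfolding F_def e using assoc[OF lm Y(1)[OF r] P(1)[OF y o] Y(3)[OF r] s] by simp
    moreover have "src G (F r) = rng G (y r r')"
      unfolding F_def using src_cmp[OF lm Y(1,3)[OF r]] s by simp
    ultimately show ?thesis using uniq(1)[OF FM(1)[OF r] P(1)[OF y o]] FM(2)[OF r] by simp
  qed
  define c where "c m = (\<lambda>i. max (m i) (n i) - n i)" for m :: "nat \<Rightarrow> nat"
  have cN: "c m \<in> NV k" if "m \<in> NV k" for m using that nN by (simp add: c_def NV_def)
  have mc: "m \<le> (\<lambda>i. n i + c m i)" for m by (simp add: c_def le_fun_def)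
  define w where "w m = fr (F (c m)) m" for m
  have W1: "w m \<in> mor G \<and> deg G (w m) = m" if m: "m \<in> NV k" for m
    using fac(1,4)[OF FM(1)[OF cN[OF m]] m] FM(2)[OF cN[OF m]] mc[of m] w_def by simp
  have W2: "fr (w m') m = w m" if m: "m \<in> NV k" and m': "m' \<in> NV k" and mm: "m \<le> m'" for m m'
  proof -
    have cc: "c m \<le> c m'" using mm by (auto simp: c_def le_fun_def intro!: diff_le_mono max.mono)
    have d': "deg G (F (c m')) = (\<lambda>i. n i + c m' i)" using FM(2)[OF cN[OF m']] .
    have m'd: "m' \<le> deg G (F (c m'))" using d' mc[of m'] by simp
    have cd: "(\<lambda>i. n i + c m i) \<le> deg G (F (c m'))" using d' cc by (auto simp: le_fun_def)
    have "fr (w m') m = fr (F (c m')) m" using triple(1)[OF FM(1)[OF cN[OF m']] m m' mm m'd] w_def by simp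
    also have "\<dots> = fr (fr (F (c m')) (\<lambda>i. n i + c m i)) m"
      using triple(1)[OF FM(1)[OF cN[OF m']] m add_NV[OF cN[OF m] nN] mc[of m] cd] by simp
    also have "\<dots> = w m" using key[OF cN[OF m] cN[OF m'] cc] w_def by simp
    finally show ?thesis .
  qed
  define z where "z = (\<lambda>a b. if in_Omega k a b then bk (w b) a else undefined)"
  have zI: "z \<in> inf_paths k G" using family(1)[of w] W1 W2 unfolding z_def by blast
  have z0: "z (\<lambda>_. 0) m = w m" if "m \<in> NV k" for m using family(2)[of w m] W1 W2 that unfolding z_def by blast
  have F0: "F (\<lambda>_. 0) = l" using F_def yv cmp_src[OF lm] by simp
  have c0: "c n = (\<lambda>_. 0)" by (simp add: c_def)
  have A: "z (\<lambda>_. 0) n = l" using z0[OF nN] w_def c0 F0 fr_deg[OF lm] n_def by simp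
  have B: "z (\<lambda>i. a i + n i) (\<lambda>i. b i + n i) = y a b" if o: "in_Omega k a b" for a b
  proof -
    have a: "a \<in> NV k" and b: "b \<in> NV k" and ab: "a \<le> b" using o by (auto simp: in_Omega_def)
    have o': "in_Omega k (\<lambda>i. a i + n i) (\<lambda>i. b i + n i)"
      using a b ab nN by (auto simp: in_Omega_def NV_def le_fun_def)
    have cb: "c (\<lambda>i. b i + n i) = b" by (simp add: c_def)
    have wb: "w (\<lambda>i. b i + n i) = F b" using fr_deg[OF FM(1)[OF b]] FM(2)[OF b] w_def cb
      by (simp add: add.commute)
    have le1: "(\<lambda>i. a i + n i) \<le> deg G (F b)" using FM(2)[OF b] ab by (auto simp: le_fun_def)
    have t: "bk (bk (F b) n) (\<lambda>i. (a i + n i) - n i) = bk (F b) (\<lambda>i. a i + n i)"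
      using triple(3)[OF FM(1)[OF b] nN add_NV[OF nN a] _ le1] by (simp add: le_fun_def)
    have bn: "bk (F b) n = y (\<lambda>_. 0) b" using uniq(2)[OF lm Y(1,3)[OF b]] F_def n_def by simp
    have "z (\<lambda>i. a i + n i) (\<lambda>i. b i + n i) = bk (F b) (\<lambda>i. a i + n i)" using o' wb z_def by simp
    also have "\<dots> = bk (y (\<lambda>_. 0) b) a" using t bn by simp
    also have "\<dots> = y a b" using PF(2)[OF y a b ab] .
    finally show ?thesis .
  qed
  show ?thesis using zI A B unfolding n_def by blast
qed

lemma exists_path:
  assumes vm: "v \<in> mor G" and vd: "deg G v = (\<lambda>_. 0)"
    and NS: "\<And>u p. u \<in> mor G \<Longrightarrow> deg G u = (\<lambda>_. 0) \<Longrightarrow> p \<in> NV k \<Longrightarrow> \<exists>\<mu>. \<mu> \<in> mor G \<and> rng G \<mu> = u \<and> deg G \<mu> = p"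
  shows "\<exists>x\<in>inf_paths k G. x (\<lambda>_. 0) (\<lambda>_. 0) = v"
proof -
  define dg where "dg N = (\<lambda>i. if i < k then N else (0::nat))" for N
  have dgN: "dg N \<in> NV k" for N by (simp add: dg_def NV_def)
  define E where "E u = (SOME \<mu>. \<mu> \<in> mor G \<and> rng G \<mu> = u \<and> deg G \<mu> = dg 1)" for u
  have EP: "E u \<in> mor G \<and> rng G (E u) = u \<and> deg G (E u) = dg 1" if "u \<in> mor G" "deg G u = (\<lambda>_. 0)" for u
    unfolding E_def using someI_ex[OF NS[OF that dgN]] .
  define L where "L = rec_nat v (\<lambda>N f. cmp G f (E (src G f)))"
  have L0: "L 0 = v" and LS: "L (Suc N) = cmp G (L N) (E (src G (L N)))" for N by (simp_all add: L_def)
  have I: "L N \<in> mor G \<and> deg G (L N) = dg N" for N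
  proof (induction N)
    case 0 then show ?case using L0 vm vd by (simp add: dg_def fun_eq_iff)
  next
    case (Suc N)
    then have m: "L N \<in> mor G" "deg G (L N) = dg N" by auto
    have e: "E (src G (L N)) \<in> mor G" "rng G (E (src G (L N))) = src G (L N)" "deg G (E (src G (L N))) = dg 1"
      using EP[OF src_mor[OF m(1)] deg_src[OF m(1)]] by auto
    show ?case using cmp_mor[OF m(1) e(1)] deg_cmp[OF m(1) e(1)] e m(2) LS
      by (auto simp: dg_def fun_eq_iff)
  qed
  have U: "fr (L (Suc N)) (dg N) = L N" for N
  proof -
    have m: "L N \<in> mor G" using I by auto
    have e: "E (src G (L N)) \<in> mor G" "rng G (E (src G (L N))) = src G (L N)"
      using EP[OF src_mor[OF m] deg_src[OF m]] by auto
    show ?thesis using uniq(1)[OF m e(1) e(2)[symmetric]] I LS by simp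
  qed
  have dle: "dg N \<le> dg N'" if "N \<le> N'" for N N' using that by (simp add: dg_def le_fun_def)
  have CH: "fr (L N') (dg N) = L N" if "N \<le> N'" for N N'
    using that
  proof (induction N')
    case 0 then show ?case using fr_deg[of "L 0"] I by simp
  next
    case (Suc N')
    show ?case
    proof (cases "N = Suc N'")
      case True then show ?thesis using fr_deg[of "L N"] I by simp
    next
      case False
      then have NN: "N \<le> N'" using Suc.prems by simp
      have "fr (L (Suc N')) (dg N) = fr (fr (L (Suc N')) (dg N')) (dg N)"
        using triple(1)[of "L (Suc N')" "dg N" "dg N'"] I[of "Suc N'"] dgN dle[OF NN] dle[of N' "Suc N'"] by simp
      also have "\<dots> = L N" using U Suc.IH[OF NN] by simp
      finally show ?thesis .
    qed
  qed
  define S where "S m = (\<Sum>i<k. m i)" for m :: "nat \<Rightarrow> nat"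
  have mS: "m \<le> dg (S m)" if "m \<in> NV k" for m
    using that by (auto simp: le_fun_def dg_def S_def NV_def intro!: member_le_sum)
  have Smono: "S m \<le> S m'" if "m \<le> m'" for m m' using that by (auto simp: S_def le_fun_def intro: sum_mono)
  define w where "w m = fr (L (S m)) m" for m
  have W1: "w m \<in> mor G \<and> deg G (w m) = m" if m: "m \<in> NV k" for m
    using fac(1,4)[of "L (S m)" m] I[of "S m"] m mS[OF m] w_def by simp
  have W2: "fr (w m') m = w m" if m: "m \<in> NV k" and m': "m' \<in> NV k" and mm: "m \<le> m'" for m m'
  proof -
    have "fr (w m') m = fr (L (S m')) m"
      using triple(1)[of "L (S m')" m m'] I[of "S m'"] m m' mm mS[OF m'] w_def by simp
    also have "\<dots> = fr (fr (L (S m')) (dg (S m))) m"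
      using triple(1)[of "L (S m')" m "dg (S m)"] I[of "S m'"] m dgN mS[OF m] dle[OF Smono[OF mm]] by simp
    also have "\<dots> = w m" using CH[OF Smono[OF mm]] w_def by simp
    finally show ?thesis .
  qed
  define x where "x = (\<lambda>a b. if in_Omega k a b then bk (w b) a else undefined)"
  have xI: "x \<in> inf_paths k G" using family(1)[of w] W1 W2 unfolding x_def by blast
  have "x (\<lambda>_. 0) (\<lambda>_. 0) = w (\<lambda>_. 0)" using family(2)[of w] W1 W2 z0_NV unfolding x_def by blast
  also have "\<dots> = v" using w_def L0 fr_deg[OF vm] vd by (simp add: S_def)
  finally show ?thesis using xI by blast
qed

lemma cyl_sub: assumes x: "x \<in> inf_paths k G" and n1: "n1 \<in> NV k" and n: "n \<in> NV k" and le: "n1 \<le> n"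
  shows "cylinder k G (x (\<lambda>_. 0) n) \<subseteq> cylinder k G (x (\<lambda>_. 0) n1)"
proof
  fix z assume "z \<in> cylinder k G (x (\<lambda>_. 0) n)"
  then have z: "z \<in> inf_paths k G" and e: "z (\<lambda>_. 0) (deg G (x (\<lambda>_. 0) n)) = x (\<lambda>_. 0) n"
    by (auto simp: cylinder_def)
  have oz: "in_Omega k (\<lambda>_. 0) r" if "r \<in> NV k" for r using that z0_NV by (simp add: in_Omega_def le_fun_def)
  have d: "deg G (x (\<lambda>_. 0) r) = r" if "r \<in> NV k" for r using P(2)[OF x oz[OF that]] by simp
  have "z (\<lambda>_. 0) n1 = fr (z (\<lambda>_. 0) n) n1" using PF(1)[OF z n1 n le] by simp
  also have "\<dots> = x (\<lambda>_. 0) n1" using e d[OF n] PF(1)[OF x n1 n le] by simp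
  finally show "z \<in> cylinder k G (x (\<lambda>_. 0) n1)" using z d[OF n1] by (simp add: cylinder_def)
qed

lemma cyl_open: "f \<in> mor G \<Longrightarrow> openin (path_topology k G) (cylinder k G f)"
proof -
  assume f: "f \<in> mor G"
  have "openin (path_topology k G) (cylinder k G f \<inter> inf_paths k G)"
    unfolding path_topology_def
    by (rule openin_subtopology_Int) (rule topology_generated_by_Basis, use f in blast)
  moreover have "cylinder k G f \<inter> inf_paths k G = cylinder k G f" by (auto simp: cylinder_def)
  ultimately show ?thesis by simp
qed

lemma gen_cyl: "generate_topology_on (cylinder k G ` mor G) T \<Longrightarrow>
   \<forall>x\<in>T \<inter> inf_paths k G. \<exists>n\<in>NV k. cylinder k G (x (\<lambda>_. 0) n) \<subseteq> T"
proof (induction rule: generate_topology_on.induct)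
  case Empty then show ?case by simp
next
  case (Int a b)
  show ?case
  proof
    fix x assume xab: "x \<in> a \<inter> b \<inter> inf_paths k G"
    then obtain n1 n2 where n1: "n1 \<in> NV k" "cylinder k G (x (\<lambda>_. 0) n1) \<subseteq> a"
      and n2: "n2 \<in> NV k" "cylinder k G (x (\<lambda>_. 0) n2) \<subseteq> b" using Int.IH by blast
    define n where "n = (\<lambda>i. max (n1 i) (n2 i))"
    have nN: "n \<in> NV k" using n1 n2 by (simp add: n_def NV_def)
    have x: "x \<in> inf_paths k G" using xab by simp
    have "cylinder k G (x (\<lambda>_. 0) n) \<subseteq> a \<inter> b"
      using cyl_sub[OF x n1(1) nN] cyl_sub[OF x n2(1) nN] n1(2) n2(2) by (auto simp: n_def le_fun_def)
    then show "\<exists>n\<in>NV k. cylinder k G (x (\<lambda>_. 0) n) \<subseteq> a \<inter> b" using nN by blast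
  qed
next
  case (UN K) then show ?case by blast
next
  case (Basis s)
  show ?case
  proof
    fix x assume xs: "x \<in> s \<inter> inf_paths k G"
    from Basis obtain f where f: "f \<in> mor G" and s: "s = cylinder k G f" by blast
    have "x (\<lambda>_. 0) (deg G f) = f" using xs s by (simp add: cylinder_def)
    then show "\<exists>n\<in>NV k. cylinder k G (x (\<lambda>_. 0) n) \<subseteq> s" using s deg_NV[OF f] by (metis order_refl)
  qed
qed

lemma open_cyl: assumes "openin (path_topology k G) U" "x \<in> U"
  shows "x \<in> inf_paths k G" "\<exists>n\<in>NV k. cylinder k G (x (\<lambda>_. 0) n) \<subseteq> U"
proof -
  obtain T where T: "openin (topology_generated_by (cylinder k G ` mor G)) T" "U = T \<inter> inf_paths k G"
    using assms(1) unfolding path_topology_def openin_subtopology by blast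
  show x: "x \<in> inf_paths k G" using T assms(2) by simp
  have "generate_topology_on (cylinder k G ` mor G) T" using T(1) by (rule openin_topology_generated_by)
  from gen_cyl[OF this] obtain n where n: "n \<in> NV k" "cylinder k G (x (\<lambda>_. 0) n) \<subseteq> T"
    using T assms(2) by blast
  have "cylinder k G (x (\<lambda>_. 0) n) \<subseteq> inf_paths k G" by (auto simp: cylinder_def)
  then show "\<exists>n\<in>NV k. cylinder k G (x (\<lambda>_. 0) n) \<subseteq> U" using n T by blast
qed

end

lemma tau_conc:
  assumes p: "p \<in> NV k" and n: "n \<in> NV k" and o: "in_Omega k a b"
    and zy: "\<forall>a b. in_Omega k a b \<longrightarrow> z (\<lambda>i. a i + n i) (\<lambda>i. b i + n i) = y a b"
  shows "tau k \<alpha> (p, m) y a b = tau k \<alpha> (p, m) z (\<lambda>i. a i + n i) (\<lambda>i. b i + n i)"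
proof -
  have o1: "in_Omega k (\<lambda>i. a i + p i) (\<lambda>i. b i + p i)" using o p by (auto simp: in_Omega_def NV_def le_fun_def)
  have o2: "in_Omega k (\<lambda>i. a i + n i) (\<lambda>i. b i + n i)" using o n by (auto simp: in_Omega_def NV_def le_fun_def)
  have o3: "in_Omega k (\<lambda>i. a i + n i + p i) (\<lambda>i. b i + n i + p i)"
    using o n p by (auto simp: in_Omega_def NV_def le_fun_def)
  have e: "(\<lambda>i. a i + n i + p i) = (\<lambda>i. a i + p i + n i)" "(\<lambda>i. b i + n i + p i) = (\<lambda>i. b i + p i + n i)"
    by (auto simp: fun_eq_iff)
  have "z (\<lambda>i. a i + n i + p i) (\<lambda>i. b i + n i + p i) = y (\<lambda>i. a i + p i) (\<lambda>i. b i + p i)"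
    using zy o1 unfolding e by auto
  then show ?thesis using o o1 o2 o3 by (simp add: tau_def shift_def path_map_def)
qed


theorem lemma5p6:
  fixes k l :: nat and G :: "'a kgraph" and \<alpha> :: "(nat \<Rightarrow> int) \<Rightarrow> 'a \<Rightarrow> 'a"
  assumes "is_kgraph k G"
    and "locally_finite_no_sources_sinks k G"
    and "is_action l G \<alpha>"
  shows "alpha_aperiodic k l G \<alpha> \<longleftrightarrow> topologically_free k l G \<alpha>"
proof -
  interpret kg k G using assms(1) by (rule kg.intro)
  show ?thesis
  proof
    assume AP: "alpha_aperiodic k l G \<alpha>"
    show "topologically_free k l G \<alpha>" unfolding topologically_free_def
    proof (intro ballI impI)
      fix s t assume s: "s \<in> NV k \<times> NV l" and t: "t \<in> NV k \<times> NV l" and st: "s \<noteq> t"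
      let ?E = "{x \<in> inf_paths k G. tau k \<alpha> s x = tau k \<alpha> t x}"
      show "path_topology k G interior_of ?E = {}"
      proof (rule ccontr)
        assume "path_topology k G interior_of ?E \<noteq> {}"
        then obtain x U where U: "openin (path_topology k G) U" "x \<in> U" "U \<subseteq> ?E"
          unfolding interior_of_def by blast
        obtain n where n: "n \<in> NV k" "cylinder k G (x (\<lambda>_. 0) n) \<subseteq> U" using open_cyl[OF U(1,2)] by blast
        have x: "x \<in> inf_paths k G" using open_cyl[OF U(1,2)] by simp
        have oz: "in_Omega k (\<lambda>_. 0) n" using n z0_NV by (simp add: in_Omega_def le_fun_def)
        define lm where "lm = x (\<lambda>_. 0) n"
        have lm: "lm \<in> mor G" "deg G lm = n" using P(1,2)[OF x oz] lm_def by simp_all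
        have uv: "src G lm \<in> vertices G" using src_mor[OF lm(1)] deg_src[OF lm(1)] by (simp add: vertices_def)
        obtain y where y: "y \<in> inf_paths k G" "y (\<lambda>_. 0) (\<lambda>_. 0) = src G lm" "tau k \<alpha> s y \<noteq> tau k \<alpha> t y"
          using AP uv s t st unfolding alpha_aperiodic_def by blast
        obtain z where z: "z \<in> inf_paths k G" "z (\<lambda>_. 0) n = lm"
          "\<forall>a b. in_Omega k a b \<longrightarrow> z (\<lambda>i. a i + n i) (\<lambda>i. b i + n i) = y a b"
          using concat[OF lm(1) y(1,2)] lm(2) by blast
        have "z \<in> cylinder k G lm" using z lm(2) by (simp add: cylinder_def)
        then have ez: "tau k \<alpha> s z = tau k \<alpha> t z" using n(2) U(3) lm_def by blast
        have "tau k \<alpha> s y = tau k \<alpha> t y"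
        proof (intro ext)
          fix a b
          show "tau k \<alpha> s y a b = tau k \<alpha> t y a b"
          proof (cases "in_Omega k a b")
            case True
            have "tau k \<alpha> (fst s, snd s) y a b = tau k \<alpha> (fst s, snd s) z (\<lambda>i. a i + n i) (\<lambda>i. b i + n i)"
              using tau_conc[OF _ n(1) True z(3)] s by auto
            moreover have "tau k \<alpha> (fst t, snd t) y a b = tau k \<alpha> (fst t, snd t) z (\<lambda>i. a i + n i) (\<lambda>i. b i + n i)"
              using tau_conc[OF _ n(1) True z(3)] t by auto
            ultimately show ?thesis using ez by simp
          next
            case False then show ?thesis by (simp add: tau_def shift_def)
          qed
        qed
        then show False using y(3) by simp
      qed
    qed
  next
    assume TF: "topologically_free k l G \<alpha>"
    show "alpha_aperiodic k l G \<alpha>" unfolding alpha_aperiodic_def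
    proof (intro ballI impI)
      fix v s t assume v: "v \<in> vertices G" and s: "s \<in> NV k \<times> NV l" and t: "t \<in> NV k \<times> NV l" and st: "s \<noteq> t"
      let ?E = "{x \<in> inf_paths k G. tau k \<alpha> s x = tau k \<alpha> t x}"
      have I: "path_topology k G interior_of ?E = {}" using TF s t st unfolding topologically_free_def by blast
      have vm: "v \<in> mor G" and vd: "deg G v = (\<lambda>_. 0)" using v by (auto simp: vertices_def)
      have NS: "\<exists>\<mu>. \<mu> \<in> mor G \<and> rng G \<mu> = u \<and> deg G \<mu> = p"
        if "u \<in> mor G" "deg G u = (\<lambda>_. 0)" "p \<in> NV k" for u p
        using assms(2) that unfolding locally_finite_no_sources_sinks_def vertices_def by blast
      obtain x where x: "x \<in> inf_paths k G" "x (\<lambda>_. 0) (\<lambda>_. 0) = v" using exists_path[OF vm vd NS] by blast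
      show "\<exists>x\<in>inf_paths k G. x (\<lambda>_. 0) (\<lambda>_. 0) = v \<and> tau k \<alpha> s x \<noteq> tau k \<alpha> t x"
      proof (rule ccontr)
        assume "\<not> ?thesis"
        then have "cylinder k G v \<subseteq> ?E" using vd by (auto simp: cylinder_def)
        moreover have "x \<in> cylinder k G v" using x vd by (simp add: cylinder_def)
        ultimately have "x \<in> path_topology k G interior_of ?E"
          using cyl_open[OF vm] unfolding interior_of_def by blast
        then show False using I by simp
      qed
    qed
  qed
qed

end
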